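(* Let $G$, $\mathcal Q_\delta$, $\mathcal T_{\mathcal X}$ and BQ-CADMM be as in the context, with arbitrary $a\in\mathbb R$, $\Delta>0$, $\delta\in(0,\Delta)$, $\rho>0$ and arbitrary data $r_1,\dots,r_n\in\mathbb R$. Let $\bar r=\frac1n\sum_{i=1}^n r_i$. Then there exists a finite $k_0$ such that for all $k\ge k_0$ exactly one of the following holds: (i) (convergence) $\mathcal Q_\delta(x_1^k)=\mathcal Q_\delta(x_2^k)=\cdots=\mathcal Q_\delta(x_n^k)=x_Q^*$ for a common value $x_Q^*\in\{a,a+\Delta\}$ independent of $k$, and $$|x_Q^*-\mathcal T_{\mathcal X}(\bar r)|\le \Big(1+4\rho\tfrac{m}{n}\Big)(\Delta-\delta)\ \text{ if } x_Q^*=a,\qquad |x_Q^*-\mathcal T_{\mathcal X}(\bar r)|<\Big(1+4\rho\tfrac{m}{n}\Big)\delta\ \text{ if } x_Q^*=a+\Delta;$$ (ii) (cycling) there is a finite period $T\ge2$ with $x_i^k=x_i^{k+T}$ for all $i=1,\dots,n$, such that $$\sum_{l=0}^{T-1}\mathcal Q_\delta(x_1^{k+l})=\sum_{l=0}^{T-1}\mathcal Q_\delta(x_2^{k+l})=\cdots=\sum_{l=0}^{T-1}\mathcal Q_\delta(x_n^{k+l}),$$ and moreover $|\bar r-(a+\Delta-\delta)|<6\rho n\Delta$.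
   Context: Let $G$ be a connected undirected simple graph on nodes $\{1,\dots,n\}$, $n\ge2$, with $m$ edges; $\mathcal N_i$ is the set of neighbors of node $i$ (with $i\notin\mathcal N_i$), so $\sum_i|\mathcal N_i|=2m$. Given $a\in\mathbb R$, $\Delta>0$ and $\delta\in(0,\Delta)$, the $\delta$-quantizer is $\mathcal Q_\delta(x)=a$ if $x\le a+\Delta-\delta$ and $\mathcal Q_\delta(x)=a+\Delta$ otherwise; $\mathcal X=[a,a+\Delta]$ and $\mathcal T_{\mathcal X}:\mathbb R\to\mathcal X$ is the projection onto $\mathcal X$ (nearest point). Given local data $r_1,\dots,r_n\in\mathbb R$ and a parameter $\rho>0$, BQ-CADMM is the deterministic iteration with $x_i^0=0$, $\alpha_i^0=0$ for all $i$ and, for $k\ge0$, $$x_i^{k+1}=\frac{1}{1+2\rho|\mathcal N_i|}\Big(\rho|\mathcal N_i|\mathcal Q_\delta(x_i^k)+\rho\sum_{j\in\mathcal N_i}\mathcal Q_\delta(x_j^k)-\alpha_i^k+r_i\Big),$$ $$\alpha_i^{k+1}=\alpha_i^k+\rho\Big(|\mathcal N_i|\mathcal Q_\delta(x_i^{k+1})-\sum_{j\in\mathcal N_i}\mathcal Q_\delta(x_j^{k+1})\Big).$$ *)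

theory Defs
  imports Complex_Main
begin

definition nodes :: "nat \<Rightarrow> nat set" where
  "nodes n = {1..n}"

definition simple_connected_graph :: "nat \<Rightarrow> (nat \<Rightarrow> nat \<Rightarrow> bool) \<Rightarrow> bool" where
  "simple_connected_graph n E \<longleftrightarrow>
     (\<forall>i j. E i j \<longrightarrow> i \<in> nodes n \<and> j \<in> nodes n) \<and>
     (\<forall>i j. E i j \<longrightarrow> E j i) \<and>
     (\<forall>i. \<not> E i i) \<and>
     (\<forall>i\<in>nodes n. \<forall>j\<in>nodes n. E\<^sup>*\<^sup>* i j)"

definition nbrs :: "nat \<Rightarrow> (nat \<Rightarrow> nat \<Rightarrow> bool) \<Rightarrow> nat \<Rightarrow> nat set" where
  "nbrs n E i = {j \<in> nodes n. E i j}"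

definition num_edges :: "nat \<Rightarrow> (nat \<Rightarrow> nat \<Rightarrow> bool) \<Rightarrow> nat" where
  "num_edges n E = card {(i, j). i \<in> nodes n \<and> j \<in> nodes n \<and> i < j \<and> E i j}"

definition quant :: "real \<Rightarrow> real \<Rightarrow> real \<Rightarrow> real \<Rightarrow> real" where
  "quant a \<Delta> \<delta> x = (if x \<le> a + \<Delta> - \<delta> then a else a + \<Delta>)"

definition proj :: "real \<Rightarrow> real \<Rightarrow> real \<Rightarrow> real" where
  "proj a \<Delta> x = max a (min (a + \<Delta>) x)"

primrec bq_cadmm :: "real \<Rightarrow> real \<Rightarrow> real \<Rightarrow> real \<Rightarrow> nat \<Rightarrow> (nat \<Rightarrow> nat \<Rightarrow> bool)
    \<Rightarrow> (nat \<Rightarrow> real) \<Rightarrow> nat \<Rightarrow> (nat \<Rightarrow> real) \<times> (nat \<Rightarrow> real)" where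
  "bq_cadmm a \<Delta> \<delta> \<rho> n E r 0 = (\<lambda>_. 0, \<lambda>_. 0)"
| "bq_cadmm a \<Delta> \<delta> \<rho> n E r (Suc k) =
     (let x = fst (bq_cadmm a \<Delta> \<delta> \<rho> n E r k);
          \<alpha> = snd (bq_cadmm a \<Delta> \<delta> \<rho> n E r k);
          Q = quant a \<Delta> \<delta>;
          x' = (\<lambda>i. (\<rho> * real (card (nbrs n E i)) * Q (x i)
                      + \<rho> * (\<Sum>j\<in>nbrs n E i. Q (x j)) - \<alpha> i + r i)
                     / (1 + 2 * \<rho> * real (card (nbrs n E i))));
          \<alpha>' = (\<lambda>i. \<alpha> i + \<rho> * (real (card (nbrs n E i)) * Q (x' i)
                      - (\<Sum>j\<in>nbrs n E i. Q (x' j))))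
      in (x', \<alpha>'))"

definition xk :: "real \<Rightarrow> real \<Rightarrow> real \<Rightarrow> real \<Rightarrow> nat \<Rightarrow> (nat \<Rightarrow> nat \<Rightarrow> bool)
    \<Rightarrow> (nat \<Rightarrow> real) \<Rightarrow> nat \<Rightarrow> nat \<Rightarrow> real" where
  "xk a \<Delta> \<delta> \<rho> n E r k i = fst (bq_cadmm a \<Delta> \<delta> \<rho> n E r k) i"

end

theory Submission
  imports Defs
begin

declare bq_cadmm.simps(2)[simp del]

locale bq =
  fixes n :: nat and E :: "nat \<Rightarrow> nat \<Rightarrow> bool" and a \<Delta> \<delta> \<rho> :: real and r :: "nat \<Rightarrow> real"
  assumes n2: "n \<ge> 2" and G: "simple_connected_graph n E"
    and Dp: "\<Delta> > 0" and dp: "0 < \<delta>" and dD: "\<delta> < \<Delta>" and rp: "\<rho> > 0"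
begin

abbreviation "X \<equiv> xk a \<Delta> \<delta> \<rho> n E r"
abbreviation "A k i \<equiv> snd (bq_cadmm a \<Delta> \<delta> \<rho> n E r k) i"
abbreviation "N i \<equiv> nbrs n E i"
abbreviation "dg i \<equiv> real (card (N i))"
abbreviation "thr \<equiv> a + \<Delta> - \<delta>"
abbreviation "q k i \<equiv> quant a \<Delta> \<delta> (X k i)"
abbreviation "V \<equiv> nodes n"

lemma finV[simp]: "finite V" by (simp add: nodes_def)
lemma cardV: "card V = n" by (simp add: nodes_def)
lemma N_sub: "N i \<subseteq> V" by (auto simp: nbrs_def)
lemma finN[simp]: "finite (N i)" using N_sub finite_subset finV by blast
lemma symE: "E i j \<Longrightarrow> E j i" using G by (auto simp: simple_connected_graph_def)
lemma dg_le: "dg i \<le> real n"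
  using card_mono[OF finV N_sub[of i]] cardV by simp
lemma dg_nn: "dg i \<ge> 0" by simp
lemma pos: "1 + 2 * \<rho> * dg i > 0" using rp by (simp add: add_pos_nonneg)

lemma X_Suc: "(1 + 2 * \<rho> * dg i) * X (Suc k) i =
   \<rho> * dg i * q k i + \<rho> * (\<Sum>j\<in>N i. q k j) - A k i + r i"
  using pos[of i] by (simp add: xk_def Let_def bq_cadmm.simps)

lemma A_Suc: "A (Suc k) i = A k i + \<rho> * (dg i * q (Suc k) i - (\<Sum>j\<in>N i. q (Suc k) j))"
  by (simp add: xk_def Let_def bq_cadmm.simps)

lemma A0: "A 0 i = 0" by simp

lemma quant_cases: "quant a \<Delta> \<delta> y = a \<or> quant a \<Delta> \<delta> y = a + \<Delta>"
  by (simp add: quant_def)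
lemma quant_a: "quant a \<Delta> \<delta> y = a \<longleftrightarrow> y \<le> thr"
  using Dp by (simp add: quant_def)
lemma quant_b: "quant a \<Delta> \<delta> y = a + \<Delta> \<longleftrightarrow> y > thr"
  using Dp by (auto simp: quant_def)
lemma quant_ge: "quant a \<Delta> \<delta> y \<ge> a" using Dp by (simp add: quant_def)
lemma quant_le: "quant a \<Delta> \<delta> y \<le> a + \<Delta>" using Dp by (simp add: quant_def)

lemma sumN_le: "(\<Sum>j\<in>N i. quant a \<Delta> \<delta> (f j)) \<le> dg i * (a + \<Delta>)"
  using sum_bounded_above[of "N i" "\<lambda>j. quant a \<Delta> \<delta> (f j)" "a+\<Delta>"] quant_le by auto
lemma sumN_ge: "(\<Sum>j\<in>N i. quant a \<Delta> \<delta> (f j)) \<ge> dg i * a"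
  using sum_bounded_below[of "N i" a "\<lambda>j. quant a \<Delta> \<delta> (f j)"] quant_ge by auto


lemma sumN_swap: "(\<Sum>i\<in>V. \<Sum>j\<in>N i. v j) = (\<Sum>i\<in>V. dg i * v i)"
proof -
  have "(\<Sum>i\<in>V. \<Sum>j\<in>N i. v j) = (\<Sum>i\<in>V. \<Sum>j\<in>V. if E i j then v j else 0)"
    by (rule sum.cong) (auto simp: nbrs_def sum.If_cases Int_def)
  also have "\<dots> = (\<Sum>j\<in>V. \<Sum>i\<in>V. if E i j then v j else 0)" by (rule sum.swap)
  also have "\<dots> = (\<Sum>j\<in>V. dg j * v j)"
  proof (rule sum.cong)
    fix j assume "j \<in> V"
    have "(\<Sum>i\<in>V. if E i j then v j else 0) = (\<Sum>i\<in>{i\<in>V. E i j}. v j)"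
      by (simp add: sum.If_cases Int_def)
    also have "{i\<in>V. E i j} = N j" using symE by (auto simp: nbrs_def)
    finally show "(\<Sum>i\<in>V. if E i j then v j else 0) = dg j * v j" by simp
  qed simp
  finally show ?thesis .
qed

lemma lap_sum: "(\<Sum>i\<in>V. dg i * v i - (\<Sum>j\<in>N i. v j)) = 0"
  by (simp add: sum_subtractf sumN_swap)

lemma sumA: "(\<Sum>i\<in>V. A k i) = 0"
proof (induction k)
  case (Suc k)
  have "(\<Sum>i\<in>V. A (Suc k) i) = (\<Sum>i\<in>V. A k i) + \<rho> * (\<Sum>i\<in>V. dg i * q (Suc k) i - (\<Sum>j\<in>N i. q (Suc k) j))"
    by (simp add: A_Suc sum.distrib sum_distrib_left)
  then show ?case using Suc lap_sum[of "q (Suc k)"] by simp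
qed simp

lemma sum_X: "(\<Sum>i\<in>V. (1 + 2 * \<rho> * dg i) * X (Suc k) i) = (\<Sum>i\<in>V. r i) + 2 * \<rho> * (\<Sum>i\<in>V. dg i * q k i)"
proof -
  have "(\<Sum>i\<in>V. (1 + 2 * \<rho> * dg i) * X (Suc k) i) =
     \<rho> * (\<Sum>i\<in>V. dg i * q k i) + \<rho> * (\<Sum>i\<in>V. \<Sum>j\<in>N i. q k j) - (\<Sum>i\<in>V. A k i) + (\<Sum>i\<in>V. r i)"
    by (subst sum.cong[OF refl X_Suc]) (simp add: sum.distrib sum_subtractf sum_distrib_left mult.assoc)
  then show ?thesis using sumA[of k] sumN_swap[of "q k"] by simp
qed

lemma A_lat: "\<exists>z::int. A k i = \<rho> * \<Delta> * of_int z"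
proof (induction k)
  case 0 then show ?case by (intro exI[of _ 0]) simp
next
  case (Suc k)
  then obtain z where z: "A k i = \<rho> * \<Delta> * of_int z" by blast
  define b where "b j = (if X (Suc k) j \<le> thr then (0::int) else 1)" for j
  have qb: "q (Suc k) j = a + \<Delta> * of_int (b j)" for j
    using Dp by (simp add: quant_def b_def)
  have "dg i * q (Suc k) i - (\<Sum>j\<in>N i. q (Suc k) j) = \<Delta> * of_int (int (card (N i)) * b i - (\<Sum>j\<in>N i. b j))"
    by (simp add: qb sum.distrib algebra_simps sum_distrib_left)
  then have "A (Suc k) i = \<rho> * \<Delta> * of_int z + \<rho> * (\<Delta> * of_int (int (card (N i)) * b i - (\<Sum>j\<in>N i. b j)))"
    by (simp only: A_Suc z)
  then have "A (Suc k) i = \<rho> * \<Delta> * of_int (z + (int (card (N i)) * b i - (\<Sum>j\<in>N i. b j)))"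
    by (simp add: algebra_simps)
  then show ?case by blast
qed

abbreviation "mm i \<equiv> r i + 2 * \<rho> * dg i * a - (1 + 2 * \<rho> * dg i) * thr"
abbreviation "MM i \<equiv> r i + 2 * \<rho> * dg i * (a + \<Delta>) - (1 + 2 * \<rho> * dg i) * thr"

lemma qa_imp: assumes "q (Suc t) i = a" shows "A t i \<ge> mm i"
proof -
  have "X (Suc t) i \<le> thr" using assms quant_a by simp
  then have "(1 + 2 * \<rho> * dg i) * X (Suc t) i \<le> (1 + 2 * \<rho> * dg i) * thr"
    using pos[of i] by (intro mult_left_mono) auto
  moreover have "\<rho> * dg i * q t i \<ge> \<rho> * dg i * a"
    using rp quant_ge by (intro mult_left_mono) auto
  moreover have "\<rho> * (\<Sum>j\<in>N i. q t j) \<ge> \<rho> * (dg i * a)"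
    using rp sumN_ge by (intro mult_left_mono) auto
  ultimately show ?thesis unfolding X_Suc by (simp add: algebra_simps)
qed

lemma qb_imp: assumes "q (Suc t) i = a + \<Delta>" shows "A t i < MM i"
proof -
  have "X (Suc t) i > thr" using assms quant_b by simp
  then have "(1 + 2 * \<rho> * dg i) * X (Suc t) i > (1 + 2 * \<rho> * dg i) * thr"
    using pos[of i] by (intro mult_strict_left_mono) auto
  moreover have "\<rho> * dg i * q t i \<le> \<rho> * dg i * (a + \<Delta>)"
    using rp quant_le by (intro mult_left_mono) auto
  moreover have "\<rho> * (\<Sum>j\<in>N i. q t j) \<le> \<rho> * (dg i * (a + \<Delta>))"
    using rp sumN_le by (intro mult_left_mono) auto
  ultimately show ?thesis unfolding X_Suc by (simp add: algebra_simps)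
qed

lemma incr_lo: "A (Suc k) i \<ge> A k i - \<rho> * dg i * \<Delta>"
proof -
  have "\<rho> * (dg i * q (Suc k) i - (\<Sum>j\<in>N i. q (Suc k) j)) \<ge> \<rho> * (dg i * a - dg i * (a + \<Delta>))"
    using rp sumN_le[where i=i] quant_ge[of "X (Suc k) i"]
    by (intro mult_left_mono) (auto intro!: diff_mono mult_left_mono)
  then show ?thesis unfolding A_Suc by (simp add: algebra_simps)
qed

lemma incr_hi: "A (Suc k) i \<le> A k i + \<rho> * dg i * \<Delta>"
proof -
  have "\<rho> * (dg i * q (Suc k) i - (\<Sum>j\<in>N i. q (Suc k) j)) \<le> \<rho> * (dg i * (a + \<Delta>) - dg i * a)"
    using rp sumN_ge[where i=i] quant_le[of "X (Suc k) i"]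
    by (intro mult_left_mono) (auto intro!: diff_mono mult_left_mono)
  then show ?thesis unfolding A_Suc by (simp add: algebra_simps)
qed

lemma step_lo: assumes "c \<le> mm i" "A k i \<ge> c - \<rho> * dg i * \<Delta>"
  shows "A (Suc k) i \<ge> c - \<rho> * dg i * \<Delta>"
proof (cases "A k i < mm i")
  case True
  then have "q (Suc k) i \<noteq> a" using qa_imp by force
  then have "q (Suc k) i = a + \<Delta>" using quant_cases by blast
  moreover have "\<rho> * (dg i * (a + \<Delta>) - (\<Sum>j\<in>N i. q (Suc k) j)) \<ge> 0"
    using rp sumN_le[where i=i] by simp
  ultimately show ?thesis using assms(2) unfolding A_Suc by simp
next
  case False
  then show ?thesis using incr_lo[of k i] assms by linarith
qed

lemma step_hi: assumes "MM i \<le> c" "A k i \<le> c + \<rho> * dg i * \<Delta>"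
  shows "A (Suc k) i \<le> c + \<rho> * dg i * \<Delta>"
proof (cases "A k i > MM i")
  case True
  then have "q (Suc k) i \<noteq> a + \<Delta>" using qb_imp by force
  then have "q (Suc k) i = a" using quant_cases by blast
  moreover have "\<rho> * (dg i * a - (\<Sum>j\<in>N i. q (Suc k) j)) \<le> 0"
    using rp sumN_ge[where i=i] by (simp add: mult_le_0_iff)
  ultimately show ?thesis using assms(2) unfolding A_Suc by simp
next
  case False
  then show ?thesis using incr_hi[of k i] assms by linarith
qed

lemma inv_lo: assumes "c \<le> mm i" "A t i \<ge> c - \<rho> * dg i * \<Delta>" "t \<le> s"
  shows "A s i \<ge> c - \<rho> * dg i * \<Delta>"
  using assms(3,2) by (induction s rule: dec_induct) (use step_lo[OF assms(1)] in auto)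

lemma inv_hi: assumes "MM i \<le> c" "A t i \<le> c + \<rho> * dg i * \<Delta>" "t \<le> s"
  shows "A s i \<le> c + \<rho> * dg i * \<Delta>"
  using assms(3,2) by (induction s rule: dec_induct) (use step_hi[OF assms(1)] in auto)

lemma rdD: "\<rho> * dg i * \<Delta> \<ge> 0" using rp Dp by simp

lemma A_lo: "A k i \<ge> min 0 (mm i) - \<rho> * dg i * \<Delta>"
  by (rule inv_lo[of _ _ 0]) (use rdD[of i] in auto)

lemma A_hi: "A k i \<le> max 0 (MM i) + \<rho> * dg i * \<Delta>"
  by (rule inv_hi[of _ _ 0]) (use rdD[of i] in auto)

lemma handshake: "(\<Sum>i\<in>V. dg i) = 2 * real (num_edges n E)"
proof -
  let ?P1 = "{(i, j). i \<in> V \<and> j \<in> V \<and> i < j \<and> E i j}"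
  let ?P2 = "{(i, j). i \<in> V \<and> j \<in> V \<and> j < i \<and> E i j}"
  have irr: "\<not> E i i" for i using G by (auto simp: simple_connected_graph_def)
  have fin1: "finite ?P1" by (rule finite_subset[of _ "V \<times> V"]) auto
  have fin2: "finite ?P2" by (rule finite_subset[of _ "V \<times> V"]) auto
  have sig: "Sigma V N = ?P1 \<union> ?P2"
    using irr by (auto simp: nbrs_def) (metis linorder_neqE_nat)
  have sw: "?P2 = prod.swap ` ?P1"
    using symE by (auto simp: image_iff)
  have c2: "card ?P2 = card ?P1" unfolding sw by (rule card_image) simp
  have "(\<Sum>i\<in>V. card (N i)) = card (Sigma V N)" by (simp add: card_SigmaI)
  also have "\<dots> = card ?P1 + card ?P2" unfolding sig
    by (rule card_Un_disjoint[OF fin1 fin2]) auto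
  finally have "(\<Sum>i\<in>V. card (N i)) = 2 * num_edges n E"
    using c2 by (simp add: num_edges_def)
  then have "real (\<Sum>i\<in>V. card (N i)) = 2 * real (num_edges n E)" by simp
  then show ?thesis by simp
qed

lemma harmonic:
  assumes h: "\<And>i. i \<in> V \<Longrightarrow> dg i * v i = (\<Sum>j\<in>N i. v j)"
    and iV: "i \<in> V" and jV: "j \<in> V"
  shows "v i = v j"
proof -
  have ne: "V \<noteq> {}" using iV by auto
  define M where "M = Max (v ` V)"
  have leM: "v k \<le> M" if "k \<in> V" for k using that unfolding M_def by simp
  have "M \<in> v ` V" unfolding M_def using ne by (intro Max_in) auto
  then obtain i0 where i0: "i0 \<in> V" "v i0 = M" by auto
  have propg: "v l = M" if "v k = M" "k \<in> V" "E k l" for k l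
  proof -
    have lN: "l \<in> N k" using that G by (auto simp: nbrs_def simple_connected_graph_def)
    have "(\<Sum>j\<in>N k. v k - v j) = 0" using h[OF that(2)] by (simp add: sum_subtractf)
    moreover have "\<forall>j\<in>N k. v k - v j \<ge> 0" using that(1) leM N_sub by auto
    ultimately have "\<forall>j\<in>N k. v k - v j = 0"
      using sum_nonneg_eq_0_iff[of "N k" "\<lambda>j. v k - v j"] by simp
    then show ?thesis using lN that(1) by auto
  qed
  have all: "v k = M" if "k \<in> V" for k
  proof -
    have "E\<^sup>*\<^sup>* i0 k" using G i0 that by (auto simp: simple_connected_graph_def)
    then show ?thesis
    proof (induction rule: rtranclp_induct)
      case base then show ?case using i0 by simp
    next
      case (step y z)
      have "y \<in> V" using step(2) G by (auto simp: simple_connected_graph_def)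
      then show ?case using propg step by blast
    qed
  qed
  show ?thesis using all iV jV by simp
qed

definition key :: "nat \<Rightarrow> (real \<times> real) list" where
  "key k = map (\<lambda>i. (q k i, A k i)) [1..<n+1]"

lemma setV: "set [1..<n+1] = V" by (auto simp: nodes_def)

lemma key_eq: "key k1 = key k2 \<longleftrightarrow> (\<forall>i\<in>V. q k1 i = q k2 i \<and> A k1 i = A k2 i)"
  unfolding key_def map_eq_conv setV by auto

lemma key_step:
  assumes "key k1 = key k2"
  shows "(\<forall>i\<in>V. X (Suc k1) i = X (Suc k2) i) \<and> key (Suc k1) = key (Suc k2)"
proof -
  have e: "\<forall>i\<in>V. q k1 i = q k2 i \<and> A k1 i = A k2 i" using assms key_eq by blast
  have xe: "X (Suc k1) i = X (Suc k2) i" if "i \<in> V" for i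
  proof -
    have "(\<Sum>j\<in>N i. q k1 j) = (\<Sum>j\<in>N i. q k2 j)"
      using e N_sub by (intro sum.cong) auto
    then have "(1 + 2 * \<rho> * dg i) * X (Suc k1) i = (1 + 2 * \<rho> * dg i) * X (Suc k2) i"
      unfolding X_Suc using e that by simp
    then show ?thesis using pos[of i] by simp
  qed
  have "\<forall>i\<in>V. q (Suc k1) i = q (Suc k2) i \<and> A (Suc k1) i = A (Suc k2) i"
  proof
    fix i assume iV: "i \<in> V"
    have "(\<Sum>j\<in>N i. q (Suc k1) j) = (\<Sum>j\<in>N i. q (Suc k2) j)"
      by (intro sum.cong refl) (metis N_sub subsetD xe)
    then show "q (Suc k1) i = q (Suc k2) i \<and> A (Suc k1) i = A (Suc k2) i"
      unfolding A_Suc using e xe iV by simp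
  qed
  then show ?thesis using xe key_eq by blast
qed

lemma abs_aux: "(y::real) \<ge> min 0 u - t \<Longrightarrow> y \<le> max 0 w + t \<Longrightarrow> t \<ge> 0 \<Longrightarrow> \<bar>y\<bar> \<le> \<bar>u\<bar> + \<bar>w\<bar> + t"
  by (auto simp: abs_le_iff min_def max_def split: if_splits)

lemma A_bound: assumes "i \<in> V"
  shows "\<bar>A k i\<bar> \<le> (\<Sum>i\<in>V. \<bar>mm i\<bar> + \<bar>MM i\<bar> + \<rho> * dg i * \<Delta>)"
proof -
  have "\<bar>A k i\<bar> \<le> \<bar>mm i\<bar> + \<bar>MM i\<bar> + \<rho> * dg i * \<Delta>"
    by (rule abs_aux[OF A_lo A_hi rdD])
  also have "\<dots> \<le> (\<Sum>i\<in>V. \<bar>mm i\<bar> + \<bar>MM i\<bar> + \<rho> * dg i * \<Delta>)"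
    using assms rdD by (intro member_le_sum) auto
  finally show ?thesis .
qed

lemma key_finite: "finite (range key)"
proof -
  define C where "C = (\<Sum>i\<in>V. \<bar>mm i\<bar> + \<bar>MM i\<bar> + \<rho> * dg i * \<Delta>)"
  define B where "B = \<lceil>C / (\<rho> * \<Delta>)\<rceil>"
  define S where "S = {a, a + \<Delta>} \<times> ((\<lambda>z. \<rho> * \<Delta> * of_int z) ` {-B..B})"
  have rD: "\<rho> * \<Delta> > 0" using rp Dp by simp
  have "A k i \<in> (\<lambda>z. \<rho> * \<Delta> * of_int z) ` {-B..B}" if "i \<in> V" for k i
  proof -
    obtain z where z: "A k i = \<rho> * \<Delta> * of_int z" using A_lat by blast
    have "\<bar>\<rho> * \<Delta> * of_int z\<bar> \<le> C" using A_bound[OF that, of k] z C_def by simp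
    then have "\<rho> * \<Delta> * \<bar>of_int z\<bar> \<le> C" using rp Dp by (simp add: abs_mult)
    then have "\<bar>of_int z\<bar> \<le> C / (\<rho> * \<Delta>)" using rD by (simp add: field_simps)
    then have "\<bar>z\<bar> \<le> B" unfolding B_def by linarith
    then show ?thesis using z by (auto intro!: image_eqI[where x=z] simp: abs_le_iff)
  qed
  note memA = this
  have "key k \<in> {xs. set xs \<subseteq> S \<and> length xs = n}" for k
  proof -
    have "set (key k) \<subseteq> S"
      unfolding key_def set_map setV
    proof (rule image_subsetI)
      fix i assume iV: "i \<in> V"
      have "q k i \<in> {a, a + \<Delta>}" using quant_cases[of "X k i"] by blast
      then show "(q k i, A k i) \<in> S" unfolding S_def using memA[OF iV] by blast
    qed
    moreover have "length (key k) = n" by (simp add: key_def)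
    ultimately show ?thesis by simp
  qed
  then have "range key \<subseteq> {xs. set xs \<subseteq> S \<and> length xs = n}" by blast
  moreover have "finite {xs. set xs \<subseteq> S \<and> length xs = n}"
    by (rule finite_lists_length_eq) (simp add: S_def)
  ultimately show ?thesis using finite_subset by blast
qed

lemma key_shift: "key k1 = key k2 \<Longrightarrow> key (k1 + j) = key (k2 + j)"
  by (induction j) (auto dest: key_step)

lemma periodic: "\<exists>k0 T. T \<ge> 1 \<and> (\<forall>k\<ge>k0. key (k + T) = key k)"
proof -
  have "\<not> inj key"
  proof
    assume "inj key"
    then have "finite (UNIV :: nat set)" using key_finite finite_imageD by blast
    then show False by simp
  qed
  then obtain k1 k2 where "key k1 = key k2" "k1 \<noteq> k2" unfolding inj_def by blast
  then obtain k1 k2 where kk: "key k1 = key k2" "k1 < k2"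
    by (metis linorder_neqE_nat)
  show ?thesis
  proof (intro exI conjI allI impI)
    show "k2 - k1 \<ge> 1" using kk by simp
    fix k assume "k1 \<le> k"
    then have "key (k1 + (k - k1)) = key (k2 + (k - k1))" using key_shift[OF kk(1)] by blast
    moreover have "k1 + (k - k1) = k" "k2 + (k - k1) = k + (k2 - k1)" using kk \<open>k1 \<le> k\<close> by auto
    ultimately show "key (k + (k2 - k1)) = key k" by simp
  qed
qed

lemma periodic_mult: assumes "\<forall>k\<ge>k0. key (k + T) = key k" "k \<ge> k0"
  shows "key (k + c * T) = key k"
proof (induction c)
  case (Suc c)
  have h: "key (k + c * T + T) = key (k + c * T)" using assms by auto
  have e: "k + Suc c * T = k + c * T + T" by simp
  show ?case by (subst e, rule trans[OF h Suc.IH])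
qed simp

lemma A_tele: "A (k + P) i = A k i + \<rho> * (dg i * (\<Sum>l<P. q (Suc (k + l)) i) - (\<Sum>j\<in>N i. \<Sum>l<P. q (Suc (k + l)) j))"
proof (induction P)
  case (Suc P)
  have "A (k + Suc P) i = A (k + P) i + \<rho> * (dg i * q (Suc (k + P)) i - (\<Sum>j\<in>N i. q (Suc (k + P)) j))"
    using A_Suc[of "k + P" i] by simp
  then show ?case using Suc by (simp add: sum.distrib algebra_simps)
qed simp

lemma sums_equal: assumes "\<forall>i\<in>V. A (k + P) i = A k i" "i \<in> V" "j \<in> V"
  shows "(\<Sum>l<P. q (Suc (k + l)) i) = (\<Sum>l<P. q (Suc (k + l)) j)"
proof (rule harmonic[OF _ assms(2,3)])
  fix i assume iV: "i \<in> V"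
  have "\<rho> * (dg i * (\<Sum>l<P. q (Suc (k + l)) i) - (\<Sum>j\<in>N i. \<Sum>l<P. q (Suc (k + l)) j)) = 0"
    using A_tele[of k P i] assms(1) iV by simp
  then show "dg i * (\<Sum>l<P. q (Suc (k + l)) i) = (\<Sum>j\<in>N i. \<Sum>l<P. q (Suc (k + l)) j)"
    using rp by simp
qed

lemma key_X: "key k1 = key k2 \<Longrightarrow> i \<in> V \<Longrightarrow> X (Suc k1) i = X (Suc k2) i"
  using key_step by blast
lemma key_q: "key k1 = key k2 \<Longrightarrow> i \<in> V \<Longrightarrow> q k1 i = q k2 i"
  using key_eq by blast
lemma key_A: "key k1 = key k2 \<Longrightarrow> i \<in> V \<Longrightarrow> A k1 i = A k2 i"
  using key_eq by blast

lemma npos: "n > 0" using n2 by simp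
lemma sum_r: "(\<Sum>i\<in>V. r i) = real n * ((\<Sum>i\<in>V. r i) / real n)" using npos by simp
lemma D_le: "(\<Sum>i\<in>V. dg i) \<le> real n * real n"
  using sum_bounded_above[of V dg "real n"] dg_le cardV by simp

lemma sum_mm: "(\<Sum>i\<in>V. mm i - \<rho> * dg i * \<Delta>) =
   (\<Sum>i\<in>V. r i) + (2 * \<rho> * a - \<rho> * \<Delta> - 2 * \<rho> * thr) * (\<Sum>i\<in>V. dg i) - real n * thr"
proof -
  have "(\<Sum>i\<in>V. mm i - \<rho> * dg i * \<Delta>) = (\<Sum>i\<in>V. r i + (2 * \<rho> * a - \<rho> * \<Delta> - 2 * \<rho> * thr) * dg i - thr)"
    by (rule sum.cong) (simp_all add: algebra_simps)
  also have "\<dots> = (\<Sum>i\<in>V. r i) + (2 * \<rho> * a - \<rho> * \<Delta> - 2 * \<rho> * thr) * (\<Sum>i\<in>V. dg i) - real n * thr"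
    by (simp add: sum.distrib sum_subtractf sum_distrib_left cardV)
  finally show ?thesis .
qed

lemma sum_MM: "(\<Sum>i\<in>V. MM i + \<rho> * dg i * \<Delta>) =
   (\<Sum>i\<in>V. r i) + (2 * \<rho> * (a + \<Delta>) + \<rho> * \<Delta> - 2 * \<rho> * thr) * (\<Sum>i\<in>V. dg i) - real n * thr"
proof -
  have "(\<Sum>i\<in>V. MM i + \<rho> * dg i * \<Delta>) = (\<Sum>i\<in>V. r i + (2 * \<rho> * (a + \<Delta>) + \<rho> * \<Delta> - 2 * \<rho> * thr) * dg i - thr)"
    by (rule sum.cong) (simp_all add: algebra_simps)
  also have "\<dots> = (\<Sum>i\<in>V. r i) + (2 * \<rho> * (a + \<Delta>) + \<rho> * \<Delta> - 2 * \<rho> * thr) * (\<Sum>i\<in>V. dg i) - real n * thr"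
    by (simp add: sum.distrib sum_subtractf sum_distrib_left cardV)
  finally show ?thesis .
qed

lemma sum_X2: "(\<Sum>i\<in>V. (1 + 2 * \<rho> * dg i) * c) = (real n + 2 * \<rho> * (\<Sum>i\<in>V. dg i)) * c"
  by (simp add: sum.distrib sum_distrib_left sum_distrib_right cardV algebra_simps)

lemma proj_lo: "\<bar>a - proj a \<Delta> y\<bar> \<le> max 0 (y - a)"
  using Dp by (auto simp: proj_def max_def min_def)
lemma proj_hi: "\<bar>a + \<Delta> - proj a \<Delta> y\<bar> \<le> max 0 (a + \<Delta> - y)"
  using Dp by (auto simp: proj_def max_def min_def)

lemma main:
  defines "rb \<equiv> (\<Sum>i\<in>nodes n. r i) / real n" and "m \<equiv> num_edges n E"
  shows "\<exists>k0::nat.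
     (\<exists>xQ \<in> {a, a + \<Delta>}.
        (\<forall>k\<ge>k0. \<forall>i\<in>nodes n. quant a \<Delta> \<delta> (X k i) = xQ) \<and>
        (xQ = a \<longrightarrow> \<bar>xQ - proj a \<Delta> rb\<bar> \<le> (1 + 4 * \<rho> * real m / real n) * (\<Delta> - \<delta>)) \<and>
        (xQ = a + \<Delta> \<longrightarrow> \<bar>xQ - proj a \<Delta> rb\<bar> < (1 + 4 * \<rho> * real m / real n) * \<delta>))
   \<or> (\<exists>T::nat. T \<ge> 2 \<and>
        (\<forall>k\<ge>k0. (\<forall>i\<in>nodes n. X k i = X (k + T) i) \<and>
           (\<forall>i\<in>nodes n. \<forall>j\<in>nodes n.
              (\<Sum>l<T. quant a \<Delta> \<delta> (X (k + l) i)) = (\<Sum>l<T. quant a \<Delta> \<delta> (X (k + l) j)))) \<and>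
        \<bar>rb - (a + \<Delta> - \<delta>)\<bar> < 6 * \<rho> * real n * \<Delta>)"
proof -
  obtain k0 T where T1: "T \<ge> 1" and per: "\<forall>k\<ge>k0. key (k + T) = key k"
    using periodic by blast
  define K where "K = Suc k0"
  define D where "D = (\<Sum>i\<in>V. dg i)"
  have D2: "D = 2 * real m" using handshake unfolding D_def m_def .
  have sr: "(\<Sum>i\<in>V. r i) = real n * rb" using sum_r unfolding rb_def .
  have Dnn: "D \<ge> 0" unfolding D_def by (simp add: sum_nonneg)
  have Dle: "D \<le> real n * real n" using D_le unfolding D_def .
  have np: "real n > 0" using npos by simp
  have Vne: "V \<noteq> {}" using n2 by (auto simp: nodes_def)
  have perc: "key (k + c * T) = key k" if "k \<ge> k0" for k c
    using periodic_mult[OF per that] .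
  have qper: "\<exists>l<T. \<forall>j\<in>V. q k j = q (Suc (k0 + l)) j" if "k \<ge> K" for k
  proof -
    define l where "l = (k - K) mod T"
    define c where "c = (k - K) div T"
    have "l + c * T = k - K" unfolding l_def c_def by (rule mod_div_mult_eq)
    then have kk: "k = Suc (k0 + l + c * T)" using that unfolding K_def by linarith
    have "key (k0 + l + c * T) = key (k0 + l)" using perc by simp
    then have "key (Suc (k0 + l + c * T)) = key (Suc (k0 + l))" using key_step by blast
    then have "\<forall>j\<in>V. q k j = q (Suc (k0 + l)) j" using key_q kk by blast
    moreover have "l < T" using T1 unfolding l_def by simp
    ultimately show ?thesis by blast
  qed
  have Aper: "\<forall>i\<in>V. A (k0 + T) i = A k0 i" using per key_A by blast
  have sT: "(\<Sum>l<T. q (Suc (k0 + l)) i) = (\<Sum>l<T. q (Suc (k0 + l)) j)" if "i \<in> V" "j \<in> V" for i j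
    using sums_equal[OF Aper that] .
  have bpos: "1 + 4 * \<rho> * real m / real n > 0" using rp np by (simp add: add_pos_nonneg)
  have beq: "(1 + 4 * \<rho> * real m / real n) * w = (real n + 2 * \<rho> * D) * w / real n" for w
    using np D2 by (simp add: field_simps)
  have sumXK: "(\<Sum>i\<in>V. (1 + 2 * \<rho> * dg i) * X (Suc K) i) = real n * rb + 2 * \<rho> * D * c"
    if "\<forall>i\<in>V. q K i = c" for c
  proof -
    have "(\<Sum>i\<in>V. dg i * q K i) = (\<Sum>i\<in>V. dg i * c)" using that by (intro sum.cong) auto
    also have "\<dots> = D * c" unfolding D_def by (simp add: sum_distrib_right)
    finally show ?thesis using sum_X[of K] sr by simp
  qed
  have sX2: "(\<Sum>i\<in>V. (1 + 2 * \<rho> * dg i) * c) = (real n + 2 * \<rho> * D) * c" for c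
    unfolding D_def by (rule sum_X2)
  show ?thesis
  proof (cases "\<exists>i0\<in>V. \<forall>l<T. q (Suc (k0 + l)) i0 = a + \<Delta>")
    case True
    then obtain i0 where i0V: "i0 \<in> V" and i0: "\<forall>l<T. q (Suc (k0 + l)) i0 = a + \<Delta>" by blast
    have cyc: "q (Suc (k0 + l)) j = a + \<Delta>" if jV: "j \<in> V" and lT: "l < T" for j l
    proof -
      have "(\<Sum>l<T. q (Suc (k0 + l)) i0) = (\<Sum>l<T. a + \<Delta>)" using i0 by (intro sum.cong) auto
      then have "(\<Sum>l<T. a + \<Delta> - q (Suc (k0 + l)) j) = 0"
        using sT[OF jV i0V] by (simp add: sum_subtractf)
      moreover have "\<forall>l\<in>{..<T}. a + \<Delta> - q (Suc (k0 + l)) j \<ge> 0" using quant_le by auto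
      ultimately have "\<forall>l\<in>{..<T}. a + \<Delta> - q (Suc (k0 + l)) j = 0"
        using sum_nonneg_eq_0_iff[of "{..<T}" "\<lambda>l. a + \<Delta> - q (Suc (k0 + l)) j"] by simp
      then show ?thesis using lT by simp
    qed
    have allq: "q k j = a + \<Delta>" if "k \<ge> K" "j \<in> V" for k j
      using qper[OF that(1)] cyc that(2) by metis
    have xK: "X (Suc K) i > thr" if "i \<in> V" for i
      using allq[of "Suc K" i] that quant_b by simp
    have "(\<Sum>i\<in>V. (1 + 2 * \<rho> * dg i) * thr) < (\<Sum>i\<in>V. (1 + 2 * \<rho> * dg i) * X (Suc K) i)"
      using xK pos Vne by (intro sum_strict_mono mult_strict_left_mono) auto
    then have H: "(real n + 2 * \<rho> * D) * thr < real n * rb + 2 * \<rho> * D * (a + \<Delta>)"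
      using sX2[of thr] sumXK[of "a + \<Delta>"] allq[of K] by simp
    have "real n * (a + \<Delta> - rb) < (real n + 2 * \<rho> * D) * \<delta>"
      using H by (simp add: algebra_simps)
    then have "a + \<Delta> - rb < (real n + 2 * \<rho> * D) * \<delta> / real n"
      using np by (simp add: pos_less_divide_eq mult.commute)
    then have b: "a + \<Delta> - rb < (1 + 4 * \<rho> * real m / real n) * \<delta>" using beq by simp
    have "\<bar>a + \<Delta> - proj a \<Delta> rb\<bar> < (1 + 4 * \<rho> * real m / real n) * \<delta>"
      using proj_hi[of rb] b bpos dp by (smt (verit) mult_pos_pos)
    moreover have "\<forall>k\<ge>Suc k0. \<forall>i\<in>V. q k i = a + \<Delta>" using allq unfolding K_def by blast
    moreover have "a + \<Delta> \<noteq> a" using Dp by simp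
    moreover have "a + \<Delta> \<in> {a, a + \<Delta>}" by simp
    ultimately show ?thesis by blast
  next
    case nhi: False
    show ?thesis
    proof (cases "\<exists>i0\<in>V. \<forall>l<T. q (Suc (k0 + l)) i0 = a")
      case True
      then obtain i0 where i0V: "i0 \<in> V" and i0: "\<forall>l<T. q (Suc (k0 + l)) i0 = a" by blast
      have cyc: "q (Suc (k0 + l)) j = a" if jV: "j \<in> V" and lT: "l < T" for j l
      proof -
        have "(\<Sum>l<T. q (Suc (k0 + l)) i0) = (\<Sum>l<T. a)" using i0 by (intro sum.cong) auto
        then have "(\<Sum>l<T. q (Suc (k0 + l)) j - a) = 0"
          using sT[OF jV i0V] by (simp add: sum_subtractf)
        moreover have "\<forall>l\<in>{..<T}. q (Suc (k0 + l)) j - a \<ge> 0" using quant_ge by auto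
        ultimately have "\<forall>l\<in>{..<T}. q (Suc (k0 + l)) j - a = 0"
          using sum_nonneg_eq_0_iff[of "{..<T}" "\<lambda>l. q (Suc (k0 + l)) j - a"] by simp
        then show ?thesis using lT by simp
      qed
      have allq: "q k j = a" if "k \<ge> K" "j \<in> V" for k j
        using qper[OF that(1)] cyc that(2) by metis
      have xK: "X (Suc K) i \<le> thr" if "i \<in> V" for i
        using allq[of "Suc K" i] that quant_a by simp
      have "(\<Sum>i\<in>V. (1 + 2 * \<rho> * dg i) * X (Suc K) i) \<le> (\<Sum>i\<in>V. (1 + 2 * \<rho> * dg i) * thr)"
        using xK pos by (intro sum_mono mult_left_mono) (auto intro: less_imp_le)
      then have H: "real n * rb + 2 * \<rho> * D * a \<le> (real n + 2 * \<rho> * D) * thr"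
        using sX2[of thr] sumXK[of a] allq[of K] by simp
      have "real n * (rb - a) \<le> (real n + 2 * \<rho> * D) * (\<Delta> - \<delta>)"
        using H by (simp add: algebra_simps)
      then have "rb - a \<le> (real n + 2 * \<rho> * D) * (\<Delta> - \<delta>) / real n"
        using np by (simp add: pos_le_divide_eq mult.commute)
      then have b: "rb - a \<le> (1 + 4 * \<rho> * real m / real n) * (\<Delta> - \<delta>)" using beq by simp
      have "\<bar>a - proj a \<Delta> rb\<bar> \<le> (1 + 4 * \<rho> * real m / real n) * (\<Delta> - \<delta>)"
        using proj_lo[of rb] b bpos dD by (smt (verit) mult_pos_pos)
      moreover have "\<forall>k\<ge>Suc k0. \<forall>i\<in>V. q k i = a" using allq unfolding K_def by blast
      moreover have "a \<noteq> a + \<Delta>" using Dp by simp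
      moreover have "a \<in> {a, a + \<Delta>}" by simp
      ultimately show ?thesis by blast
    next
      case nlo: False
      have hasa: "\<exists>l<T. q (Suc (k0 + l)) i = a" if "i \<in> V" for i
        using nhi that quant_cases by metis
      have hasb: "\<exists>l<T. q (Suc (k0 + l)) i = a + \<Delta>" if "i \<in> V" for i
        using nlo that quant_cases by metis
      have lo: "A (k0 + T) i \<ge> mm i - \<rho> * dg i * \<Delta>" if iV: "i \<in> V" for i
      proof -
        obtain l where "l < T" "q (Suc (k0 + l)) i = a" using hasa[OF iV] by blast
        then have "A (k0 + l) i \<ge> mm i" "k0 + l \<le> k0 + T" using qa_imp by auto
        then show ?thesis using inv_lo[of "mm i" i "k0 + l" "k0 + T"] rdD[of i] by linarith
      qed
      have hi: "A (k0 + T) i \<le> MM i + \<rho> * dg i * \<Delta>" if iV: "i \<in> V" for i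
      proof -
        obtain l where "l < T" "q (Suc (k0 + l)) i = a + \<Delta>" using hasb[OF iV] by blast
        then have "A (k0 + l) i < MM i" "k0 + l \<le> k0 + T" using qb_imp by auto
        then show ?thesis using inv_hi[of i "MM i" "k0 + l" "k0 + T"] rdD[of i] by linarith
      qed
      have "(\<Sum>i\<in>V. mm i - \<rho> * dg i * \<Delta>) \<le> (\<Sum>i\<in>V. A (k0 + T) i)"
        using lo by (intro sum_mono) auto
      then have L: "real n * rb + (2 * \<rho> * a - \<rho> * \<Delta> - 2 * \<rho> * thr) * D - real n * thr \<le> 0"
        unfolding sum_mm sumA sr D_def .
      have "(\<Sum>i\<in>V. A (k0 + T) i) \<le> (\<Sum>i\<in>V. MM i + \<rho> * dg i * \<Delta>)"
        using hi by (intro sum_mono) auto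
      then have U: "0 \<le> real n * rb + (2 * \<rho> * (a + \<Delta>) + \<rho> * \<Delta> - 2 * \<rho> * thr) * D - real n * thr"
        unfolding sum_MM sumA sr D_def .
      have c1: "(\<rho> * \<Delta> + 2 * \<rho> * (\<Delta> - \<delta>)) * D \<le> (3 * \<rho> * \<Delta>) * D"
        using Dnn rp dp by (intro mult_right_mono) auto
      have c2: "(\<rho> * \<Delta> + 2 * \<rho> * \<delta>) * D \<le> (3 * \<rho> * \<Delta>) * D"
        using Dnn rp dD by (intro mult_right_mono) auto
      have c3: "(3 * \<rho> * \<Delta>) * D \<le> (3 * \<rho> * \<Delta>) * (real n * real n)"
        using Dle rp Dp by (intro mult_left_mono) auto
      have "real n * (rb - thr) \<le> (\<rho> * \<Delta> + 2 * \<rho> * (\<Delta> - \<delta>)) * D"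
        using L by (simp add: algebra_simps)
      then have "real n * (rb - thr) \<le> real n * (3 * \<rho> * \<Delta> * real n)" using c1 c3 by (simp add: algebra_simps)
      then have r1: "rb - thr \<le> 3 * \<rho> * \<Delta> * real n" using np by simp
      have "real n * (thr - rb) \<le> (\<rho> * \<Delta> + 2 * \<rho> * \<delta>) * D"
        using U by (simp add: algebra_simps)
      then have "real n * (thr - rb) \<le> real n * (3 * \<rho> * \<Delta> * real n)" using c2 c3 by (simp add: algebra_simps)
      then have r2: "thr - rb \<le> 3 * \<rho> * \<Delta> * real n" using np by simp
      have "0 < \<rho> * \<Delta> * real n" using rp Dp np by simp
      then have rbb: "\<bar>rb - thr\<bar> < 6 * \<rho> * real n * \<Delta>" using r1 r2 by (simp add: abs_less_iff algebra_simps)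
      have xper: "\<forall>i\<in>V. X k i = X (k + 2 * T) i" if kK: "k \<ge> K" for k
      proof -
        obtain k' where k': "k = Suc k'" "k' \<ge> k0" using kK unfolding K_def by (cases k) auto
        have "key (k' + 2 * T) = key k'" using perc[OF k'(2)] .
        then have "\<forall>i\<in>V. X (Suc (k' + 2 * T)) i = X (Suc k') i" using key_X by blast
        then show ?thesis using k'(1) by simp
      qed
      have sper: "(\<Sum>l<2 * T. q (k + l) i) = (\<Sum>l<2 * T. q (k + l) j)" if kK: "k \<ge> K" and ij: "i \<in> V" "j \<in> V" for k i j
      proof -
        obtain k' where k': "k = Suc k'" "k' \<ge> k0" using kK unfolding K_def by (cases k) auto
        have "key (k' + 2 * T) = key k'" using perc[OF k'(2)] .
        then have "\<forall>i\<in>V. A (k' + 2 * T) i = A k' i" using key_A by blast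
        from sums_equal[OF this ij] show ?thesis using k' by simp
      qed
      have "\<forall>k\<ge>Suc k0. (\<forall>i\<in>V. X k i = X (k + 2 * T) i) \<and>
           (\<forall>i\<in>V. \<forall>j\<in>V. (\<Sum>l<2 * T. q (k + l) i) = (\<Sum>l<2 * T. q (k + l) j))"
        using xper sper unfolding K_def by blast
      moreover have "2 \<le> 2 * T" using T1 by simp
      ultimately show ?thesis using rbb by blast
    qed
  qed
qed

end
theorem theorem2:
  fixes n :: nat and E :: "nat \<Rightarrow> nat \<Rightarrow> bool"
    and a \<Delta> \<delta> \<rho> :: real and r :: "nat \<Rightarrow> real"
  assumes "n \<ge> 2"
    and "simple_connected_graph n E"
    and "\<Delta> > 0" and "0 < \<delta>" and "\<delta> < \<Delta>" and "\<rho> > 0"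
  defines "rbar \<equiv> (\<Sum>i\<in>nodes n. r i) / real n"
    and "m \<equiv> num_edges n E"
    and "x \<equiv> xk a \<Delta> \<delta> \<rho> n E r"
    and "Q \<equiv> quant a \<Delta> \<delta>"
  shows "\<exists>k0::nat.
     (\<exists>xQ \<in> {a, a + \<Delta>}.
        (\<forall>k\<ge>k0. \<forall>i\<in>nodes n. Q (x k i) = xQ) \<and>
        (xQ = a \<longrightarrow> \<bar>xQ - proj a \<Delta> rbar\<bar> \<le> (1 + 4 * \<rho> * real m / real n) * (\<Delta> - \<delta>)) \<and>
        (xQ = a + \<Delta> \<longrightarrow> \<bar>xQ - proj a \<Delta> rbar\<bar> < (1 + 4 * \<rho> * real m / real n) * \<delta>))
   \<or> (\<exists>T::nat. T \<ge> 2 \<and>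
        (\<forall>k\<ge>k0. (\<forall>i\<in>nodes n. x k i = x (k + T) i) \<and>
           (\<forall>i\<in>nodes n. \<forall>j\<in>nodes n.
              (\<Sum>l<T. Q (x (k + l) i)) = (\<Sum>l<T. Q (x (k + l) j)))) \<and>
        \<bar>rbar - (a + \<Delta> - \<delta>)\<bar> < 6 * \<rho> * real n * \<Delta>)"
proof -
  interpret bq n E a \<Delta> \<delta> \<rho> r
    using assms(1-6) by unfold_locales
  show ?thesis
    unfolding assms(7-10) using main by simp
qed

end
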